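(* The set $K$ defined in the context has empty interior in $\mathbb{R}^2$.
   Context: For $k\ge 0$ and $n\ge 1$ let $t_{k,n}:=\frac{1}{2^k n}$. Define the similarities of $\mathbb{R}^2$: $U(x,y)=\left(\frac{x}{2},\frac{y+1}{2}\right)$, $D_0(x,y)=\left(\frac{x}{2},\frac{y}{2}\right)$, and $D_{k,n}(x,y)=\left(\frac{x+t_{k,n}}{2},\frac{y}{2}\right)$ for $k\ge0,n\ge1$. $K$ is the unique non-empty compact set $K\subset\mathbb{R}^2$ satisfying $K=U(K)\cup D_0(K)\cup\bigcup_{k\ge0,n\ge1}D_{k,n}(K)$. *)

theory Defs
  imports "HOL-Analysis.Analysis"
begin

definition tkn :: "nat \<Rightarrow> nat \<Rightarrow> real" where
  "tkn k n = 1 / (2 ^ k * real n)"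

definition U_map :: "real \<times> real \<Rightarrow> real \<times> real" where
  "U_map p = (fst p / 2, (snd p + 1) / 2)"

definition D0_map :: "real \<times> real \<Rightarrow> real \<times> real" where
  "D0_map p = (fst p / 2, snd p / 2)"

definition Dkn_map :: "nat \<Rightarrow> nat \<Rightarrow> real \<times> real \<Rightarrow> real \<times> real" where
  "Dkn_map k n p = ((fst p + tkn k n) / 2, snd p / 2)"

definition IFS_op :: "(real \<times> real) set \<Rightarrow> (real \<times> real) set" where
  "IFS_op S = U_map ` S \<union> D0_map ` S \<union> (\<Union>k. \<Union>n\<in>{1..}. Dkn_map k n ` S)"

end

theory Submission
  imports Defs
begin

definition T0 :: "real set" where
  "T0 = insert 0 (range (\<lambda>m. inverse (real (Suc m))))"

lemma T0_compact: "compact T0"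
  unfolding T0_def by (rule compact_sequence_with_limit[OF LIMSEQ_inverse_real_of_nat])

lemma T0_countable: "countable T0"
  unfolding T0_def by simp

lemma tkn_T0: assumes "n \<ge> 1" shows "tkn k n \<in> T0"
proof -
  have "Suc (2^k*n - 1) = 2^k*n" using assms by simp
  then have "real (Suc (2^k*n - 1)) = 2^k * real n" by (metis of_nat_mult of_nat_numeral of_nat_power)
  then have "tkn k n = inverse (real (Suc (2^k*n - 1)))" unfolding tkn_def by (simp add: divide_inverse)
  then show ?thesis unfolding T0_def by blast
qed

lemma decomp:
  assumes "K = IFS_op K" "p \<in> K"
  shows "(\<exists>q\<in>K. p = (fst q/2, (snd q+1)/2)) \<or> (\<exists>q\<in>K. \<exists>t\<in>T0. p = ((fst q + t)/2, snd q/2))"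
proof -
  from assms have "p \<in> IFS_op K" by simp
  then consider (u) "p \<in> U_map ` K" | (d) "p \<in> D0_map ` K" | (k) k n where "n \<ge> 1" "p \<in> Dkn_map k n ` K"
    unfolding IFS_op_def by blast
  then show ?thesis
  proof cases
    case u then show ?thesis unfolding U_map_def by auto
  next
    case d
    have "(0::real) \<in> T0" unfolding T0_def by simp
    with d show ?thesis unfolding D0_map_def by force
  next
    case (k k n)
    with tkn_T0[OF k(1), of k] show ?thesis unfolding Dkn_map_def by force
  qed
qed

lemma snd_bounds:
  assumes "K \<noteq> {}" "compact K" "K = IFS_op K"
  shows "\<forall>p\<in>K. 0 \<le> snd p \<and> snd p \<le> 1"
proof -
  have c: "compact (snd ` K)" using assms(2) by (intro compact_continuous_image continuous_intros)
  have ne: "snd ` K \<noteq> {}" using assms(1) by simp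
  obtain m where m: "m \<in> snd ` K" "\<forall>y\<in>snd ` K. m \<le> y" using compact_attains_inf[OF c ne] by blast
  obtain M where M: "M \<in> snd ` K" "\<forall>y\<in>snd ` K. y \<le> M" using compact_attains_sup[OF c ne] by blast
  obtain p where p: "p \<in> K" "m = snd p" using m(1) by blast
  have "m \<ge> 0"
  proof (rule ccontr)
    assume "\<not> m \<ge> 0"
    from decomp[OF assms(3) p(1)] show False
    proof
      assume "\<exists>q\<in>K. p = (fst q/2, (snd q+1)/2)"
      then obtain q where "q \<in> K" "p = (fst q/2, (snd q+1)/2)" by blast
      moreover have "m \<le> snd q" using m(2) \<open>q \<in> K\<close> by blast
      ultimately show False using p(2) \<open>\<not> m \<ge> 0\<close> by auto
    next
      assume "\<exists>q\<in>K. \<exists>t\<in>T0. p = ((fst q + t)/2, snd q/2)"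
      then obtain q t where "q \<in> K" "p = ((fst q + t)/2, snd q/2)" by blast
      moreover have "m \<le> snd q" using m(2) \<open>q \<in> K\<close> by blast
      ultimately show False using p(2) \<open>\<not> m \<ge> 0\<close> by auto
    qed
  qed
  obtain P where P: "P \<in> K" "M = snd P" using M(1) by blast
  have "M \<le> 1"
  proof (rule ccontr)
    assume "\<not> M \<le> 1"
    from decomp[OF assms(3) P(1)] show False
    proof
      assume "\<exists>q\<in>K. P = (fst q/2, (snd q+1)/2)"
      then obtain q where "q \<in> K" "P = (fst q/2, (snd q+1)/2)" by blast
      moreover have "snd q \<le> M" using M(2) \<open>q \<in> K\<close> by blast
      ultimately show False using P(2) \<open>\<not> M \<le> 1\<close> by auto
    next
      assume "\<exists>q\<in>K. \<exists>t\<in>T0. P = ((fst q + t)/2, snd q/2)"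
      then obtain q t where "q \<in> K" "P = ((fst q + t)/2, snd q/2)" by blast
      moreover have "snd q \<le> M" using M(2) \<open>q \<in> K\<close> by blast
      ultimately show False using P(2) \<open>\<not> M \<le> 1\<close> by auto
    qed
  qed
  show ?thesis using \<open>m \<ge> 0\<close> \<open>M \<le> 1\<close> m(2) M(2) by force
qed

lemma pow_small: "(e::real) > 0 \<Longrightarrow> \<exists>n. 1/2^n < e"
  using real_arch_pow_inv[of e "1/2"] by (auto simp: power_one_over)

lemma cusp:
  assumes "K \<noteq> {}" "compact K" "K = IFS_op K" and B: "\<forall>p\<in>K. \<bar>fst p\<bar> \<le> B"
  shows "p \<in> K \<Longrightarrow> snd p > 1 - 1/2^m \<Longrightarrow> \<bar>fst p\<bar> \<le> B/2^m"
proof (induction m arbitrary: p)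
  case 0
  then show ?case using B by simp
next
  case (Suc m)
  have sb: "\<forall>p\<in>K. 0 \<le> snd p \<and> snd p \<le> 1" using snd_bounds[OF assms(1-3)] .
  have h: "snd p > 1/2"
  proof -
    have "(1::real)/2^Suc m \<le> 1/2" by (simp add: field_simps)
    then show ?thesis using Suc.prems(2) by linarith
  qed
  from decomp[OF assms(3) Suc.prems(1)] show ?case
  proof
    assume "\<exists>q\<in>K. p = (fst q/2, (snd q+1)/2)"
    then obtain q where q: "q \<in> K" "p = (fst q/2, (snd q+1)/2)" by blast
    have "snd q > 1 - 1/2^m" using Suc.prems(2) q(2) by (auto simp: field_simps)
    then have "\<bar>fst q\<bar> \<le> B/2^m" using Suc.IH q(1) by blast
    then show ?thesis using q(2) by (simp add: field_simps)
  next
    assume "\<exists>q\<in>K. \<exists>t\<in>T0. p = ((fst q + t)/2, snd q/2)"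
    then obtain q t where q: "q \<in> K" "p = ((fst q + t)/2, snd q/2)" by blast
    then show ?thesis using sb h by auto
  qed
qed

fun S :: "nat \<Rightarrow> real set" where
  "S 0 = {0}"
| "S (Suc N) = (\<lambda>(s,t). s + 2^N * t) ` (S N \<times> T0)"

lemma S_compact: "compact (S N)"
proof (induction N)
  case 0 then show ?case by simp
next
  case (Suc N)
  show ?case unfolding S.simps
    by (intro compact_continuous_image compact_Times Suc T0_compact)
       (auto intro!: continuous_intros simp: case_prod_unfold)
qed

lemma S_countable: "countable (S N)"
  by (induction N) (auto intro: countable_image simp: T0_countable)

lemma zero_T0: "0 \<in> T0" unfolding T0_def by simp

lemma mainlem:
  assumes "K \<noteq> {}" "compact K" "K = IFS_op K"
  shows "\<forall>p j. p \<in> K \<longrightarrow> real j / 2^N < snd p \<longrightarrow> snd p < (real j + 1)/2^N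
     \<longrightarrow> (\<exists>s\<in>S N. (2^N * fst p - s, 2^N * snd p - real j) \<in> K)"
proof (induction N)
  case 0
  have sb: "\<forall>p\<in>K. 0 \<le> snd p \<and> snd p \<le> 1" using snd_bounds[OF assms(1-3)] .
  show ?case
  proof (intro allI impI)
    fix p j assume p: "p \<in> K" "real j / 2^0 < snd p"
    then have "real j < 1" using sb by force
    then have "j = 0" by simp
    then show "\<exists>s\<in>S 0. (2^0 * fst p - s, 2^0 * snd p - real j) \<in> K" using p by simp
  qed
next
  case (Suc N)
  have sb: "\<forall>p\<in>K. 0 \<le> snd p \<and> snd p \<le> 1" using snd_bounds[OF assms(1-3)] .
  show ?case
  proof (intro allI impI)
    fix p j assume p: "p \<in> K" "real j / 2^Suc N < snd p" "snd p < (real j + 1)/2^Suc N"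
    show "\<exists>s\<in>S (Suc N). (2^Suc N * fst p - s, 2^Suc N * snd p - real j) \<in> K"
    proof (cases "j \<ge> 2^N")
      case True
      have "real j \<ge> 2^N" using True by (metis of_nat_le_iff of_nat_numeral of_nat_power)
      then have "real j / 2^Suc N \<ge> 1/2" by (simp add: field_simps)
      then have h: "snd p > 1/2" using p(2) by linarith
      from decomp[OF assms(3) p(1)] show ?thesis
      proof
        assume "\<exists>q\<in>K. p = (fst q/2, (snd q+1)/2)"
        then obtain q where q: "q \<in> K" "p = (fst q/2, (snd q+1)/2)" by blast
        define j' where "j' = j - 2^N"
        have rj: "real j' = real j - 2^N" unfolding j'_def using True
          by (simp add: of_nat_diff)
        have "real j' / 2^N < snd q" using p(2) q(2) rj by (auto simp: field_simps)
        moreover have "snd q < (real j' + 1)/2^N" using p(3) q(2) rj by (auto simp: field_simps)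
        ultimately obtain s where s: "s \<in> S N" "(2^N * fst q - s, 2^N * snd q - real j') \<in> K"
          using Suc.IH q(1) by blast
        have "s \<in> S (Suc N)" using s(1) zero_T0 by (force simp: image_iff)
        moreover have "(2^Suc N * fst p - s, 2^Suc N * snd p - real j) = (2^N * fst q - s, 2^N * snd q - real j')"
          using q(2) rj by (auto simp: field_simps)
        ultimately show ?thesis using s(2) by (smt (verit))
      next
        assume "\<exists>q\<in>K. \<exists>t\<in>T0. p = ((fst q + t)/2, snd q/2)"
        then obtain q t where q: "q \<in> K" "p = ((fst q + t)/2, snd q/2)" by blast
        then show ?thesis using sb h by auto
      qed
    next
      case False
      have "real j + 1 \<le> 2^N" using False
        by (metis not_le Suc_leI of_nat_Suc of_nat_le_iff of_nat_numeral of_nat_power add.commute)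
      then have "(real j + 1) / 2^Suc N \<le> 1/2" by (simp add: field_simps)
      then have h: "snd p < 1/2" using p(3) by linarith
      from decomp[OF assms(3) p(1)] show ?thesis
      proof
        assume "\<exists>q\<in>K. p = (fst q/2, (snd q+1)/2)"
        then obtain q where q: "q \<in> K" "p = (fst q/2, (snd q+1)/2)" by blast
        then show ?thesis using sb h by auto
      next
        assume "\<exists>q\<in>K. \<exists>t\<in>T0. p = ((fst q + t)/2, snd q/2)"
        then obtain q t where q: "q \<in> K" "t \<in> T0" "p = ((fst q + t)/2, snd q/2)" by blast
        have "real j / 2^N < snd q" using p(2) q(3) by (auto simp: field_simps)
        moreover have "snd q < (real j + 1)/2^N" using p(3) q(3) by (auto simp: field_simps)
        ultimately obtain s where s: "s \<in> S N" "(2^N * fst q - s, 2^N * snd q - real j) \<in> K"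
          using Suc.IH q(1) by blast
        have "s + 2^N * t \<in> S (Suc N)" using s(1) q(2) by (force simp: image_iff)
        moreover have "(2^Suc N * fst p - (s + 2^N * t), 2^Suc N * snd p - real j) = (2^N * fst q - s, 2^N * snd q - real j)"
          using q(3) by (auto simp: field_simps)
        ultimately show ?thesis using s(2) by metis
      qed
    qed
  qed
qed

theorem proposition2p3:
  fixes K :: "(real \<times> real) set"
  assumes "K \<noteq> {}" and "compact K" and "K = IFS_op K"
  shows "interior K = {}"
proof (rule ccontr)
  assume "interior K \<noteq> {}"
  then obtain z where "z \<in> interior K" by blast
  then obtain r where r: "r > 0" "ball z r \<subseteq> K" using mem_interior by blast
  obtain x0 y0 where z: "z = (x0, y0)" by (cases z)
  have sb: "\<forall>p\<in>K. 0 \<le> snd p \<and> snd p \<le> 1" using snd_bounds[OF assms] .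
  have "z \<in> K" using r by (meson centre_in_ball subsetD)
  then have y0: "0 \<le> y0" using sb z by force
  obtain b where b: "b > 0" "\<forall>p\<in>K. norm p \<le> b"
    using compact_imp_bounded[OF assms(2)] bounded_pos by blast
  have B: "\<forall>p\<in>K. \<bar>fst p\<bar> \<le> b"
  proof
    fix p assume "p \<in> K"
    have "\<bar>fst p\<bar> \<le> norm p" using norm_fst_le[of "fst p" "snd p"] by simp
    then show "\<bar>fst p\<bar> \<le> b" using b \<open>p \<in> K\<close> by force
  qed
  obtain N where N: "1/2^N < r/2" using pow_small[of "r/2"] r(1) by auto
  define j where "j = nat \<lfloor>2^N * y0\<rfloor>"
  have j1: "real j \<le> 2^N * y0" unfolding j_def using y0 by simp
  have j2: "2^N * y0 < real j + 1" unfolding j_def using y0 by linarith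
  have inS: "2^N * x \<in> S N" if x: "\<bar>x - x0\<bar> < r/2" for x
  proof -
    have "2^N * x \<in> closure (S N)"
      unfolding closure_approachable
    proof (intro allI impI)
      fix e :: real assume e: "e > 0"
      obtain L where L: "1/2^L < e/b" using pow_small[of "e/b"] e b by auto
      define Y where "Y = (real j + 1 - 1/2^(Suc L)) / 2^N"
      have q: "1/(2::real)^Suc L < 1" using one_less_power[of "2::real" "Suc L"] by simp
      have Y1: "real j / 2^N < Y" unfolding Y_def
        by (rule divide_strict_right_mono) (use q in auto)
      have Y2: "Y < (real j + 1) / 2^N" unfolding Y_def by (simp add: field_simps)
      have "\<bar>Y - y0\<bar> < 1/2^N"
      proof -
        have a: "real j / 2^N \<le> y0" using j1 by (simp add: field_simps)
        have c: "y0 < (real j + 1) / 2^N" using j2 by (simp add: field_simps)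
        have "(real j + 1) / 2^N = real j / 2^N + 1/2^N" by (simp add: field_simps)
        then show ?thesis using a c Y1 Y2 by linarith
      qed
      then have "dist (x, Y) z < r"
        unfolding z dist_Pair_Pair dist_real_def
        using sqrt_sum_squares_le_sum_abs[of "x - x0" "Y - y0"] x N by (simp add: power2_abs)
      then have "(x, Y) \<in> K" using r(2) by (auto simp: dist_commute)
      then obtain s where s: "s \<in> S N" "(2^N * x - s, 2^N * Y - real j) \<in> K"
        using mainlem[OF assms, of N] Y1 Y2 by fastforce
      have "2^N * Y - real j = 1 - 1/2^Suc L" unfolding Y_def by (simp add: field_simps)
      moreover have "1 - 1/2^Suc L > 1 - 1/(2::real)^L" by (simp add: field_simps)
      ultimately have "\<bar>2^N * x - s\<bar> \<le> b/2^L"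
        using cusp[OF assms B, of "(2^N * x - s, 2^N * Y - real j)" L] s(2) by auto
      also have "b/2^L < e" using L b by (simp add: field_simps)
      finally show "\<exists>y\<in>S N. dist y (2^N * x) < e" using s(1)
        by (metis dist_real_def abs_minus_commute)
    qed
    then show ?thesis using S_compact compact_imp_closed closure_closed by metis
  qed
  have "{2^N * (x0 - r/2) <..< 2^N * (x0 + r/2)} \<subseteq> S N"
  proof
    fix w assume w: "w \<in> {2^N * (x0 - r/2) <..< 2^N * (x0 + r/2)}"
    have P: "(2::real)^N > 0" by simp
    have e1: "w / 2^N - x0 = (w - 2^N * x0) / 2^N" using P by (simp add: field_simps)
    have "\<bar>w - 2^N * x0\<bar> < 2^N * (r/2)" unfolding abs_less_iff using w by (auto simp: algebra_simps)
    then have "\<bar>w / 2^N - x0\<bar> < r/2" unfolding e1 using P by (simp add: pos_divide_less_eq mult.commute)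
    from inS[OF this] show "w \<in> S N" by simp
  qed
  then have "countable {2^N * (x0 - r/2) <..< 2^N * (x0 + r/2)}"
    using S_countable countable_subset by blast
  moreover have "2^N * (x0 - r/2) < 2^N * (x0 + r/2)" using r(1) by simp
  ultimately show False using uncountable_open_interval by blast
qed

end
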